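(* Let $\dot{\mathbf{x}}=\mathbf{F}(\mathbf{x})$ have a stable limit cycle $\mathcal{A}$ with angular frequency $\Omega>0$ and basin $\mathcal{B}(\mathcal{A})$, whose Floquet characteristic multipliers $\mu_1,\dots,\mu_{n-1}$ are distinct with $|\mu_{n-1}|\le\cdots\le|\mu_1|<1$, and characteristic exponents $\nu_j$ ($\mu_j=e^{2\pi\nu_j/\Omega}$, $\mathrm{Re}[\nu_j]<0$). Let $L_\mathcal{B}$ be the generator of the Koopman semigroup $\{U^t_\mathcal{B}\}_{t\ge0}$ restricted to $\mathcal{B}(\mathcal{A})$, acting on the averaging kernel Hilbert space $\mathcal{S}_{\mathbf{z},\theta}$. Then for every $s\in\mathbb{C}$ with $\mathrm{Re}[s]>0$ and every $f\in\mathcal{S}_{\mathbf{z},\theta}$, $$R(s;L_\mathcal{B})f=\sum_{\substack{k_1,\dots,k_{n-1}\in\mathbb{N}_0\\ m\in\mathbb{Z}}}\frac{P_{k_1\cdots k_{n-1},m}f}{s-\{(k_1\nu_1+\cdots+k_{n-1}\nu_{n-1})+\mathrm{i}m\Omega\}},$$ the series converging in $\mathcal{S}_{\mathbf{z},\theta}$; the region of convergence of $R(s;L_\mathcal{B})$ is $\{s\in\mathbb{C}:\mathrm{Re}[s]>0\}$.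
   Context: Koopman operators $U^tf=f\circ\mathbf{S}^t$, generator $Lf=\lim_{t\downarrow0}(U^tf-f)/t$, Koopman resolvent $R(s;L)=(sI-L)^{-1}$, given for strongly continuous semigroups by $\int_0^\infty e^{-st}U^tf\,\mathrm{d}t$. In $\mathcal{B}(\mathcal{A})$ the dynamics are conjugate to $\dot{\mathbf{y}}=\mathbf{A}(\theta)\mathbf{y}$, $\dot\theta=\Omega$, with $\mathbf{y}\in\mathbb{R}^{n-1}$, $\theta\in\mathbb{T}$, $\mathbf{A}$ $2\pi$-periodic; with Floquet matrix $\mathbf{P}(\theta)$, Floquet stability matrix $\mathbf{B}$ (eigenvalues $\mu_j$) diagonalized by $\mathbf{V}$, set $\mathbf{z}(\mathbf{y},\theta)=\mathbf{V}^{-1}\mathbf{P}(\theta)^{-1}\mathbf{y}$. Then $\phi_{k_1\cdots k_{n-1},m}=z_1^{k_1}\cdots z_{n-1}^{k_{n-1}}e^{\mathrm{i}m\theta}$ is a Koopman eigenfunction with eigenvalue $k_1\nu_1+\cdots+k_{n-1}\nu_{n-1}+\mathrm{i}m\Omega$. The space $\mathcal{S}_{\mathbf{z},\theta}$ consists of functions analytic (entire) in $\mathbf{z}\in\mathbb{C}^{n-1}$ and $\mathscr{L}^2$ in $\theta\in\mathbb{T}$, expanded as $f=\sum_{k,m}\phi_{k_1\cdots k_{n-1},m}V_{k_1\cdots k_{n-1},m}$ with $\|f\|^2=\sum_{k,m}|V_{k_1\cdots k_{n-1},m}|^2k_1!\cdots k_{n-1}!$; projections $P_{k_1\cdots k_{n-1},m}f=\phi_{k_1\cdots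 k_{n-1},m}V_{k_1\cdots k_{n-1},m}$ (orthogonal). The semigroup acts as $U^t_\mathcal{B}f=\sum_{k,m}\phi_{k,m}V_{k,m}e^{(k_1\nu_1+\cdots+k_{n-1}\nu_{n-1}+\mathrm{i}m\Omega)t}$ and is strongly continuous. *)

theory Defs
  imports "HOL-Analysis.Analysis"
begin

text \<open>Model of the averaging kernel Hilbert space S_{z,theta} on the basin B(A),
 in the coordinates (z, theta) of the paper, with d = n-1 the dimension of z.
 An element f = sum phi_{k,m} V_{k,m} is represented by its coefficient family
 V indexed by multi-indices k (supported on indices 0..d-1, 0-based) and m in Z.\<close>

type_synonym idx = "(nat \<Rightarrow> nat) \<times> int"
type_synonym coeffs = "idx \<Rightarrow> complex"

definition idx_set :: "nat \<Rightarrow> idx set" where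
  "idx_set d = {(k, m). \<forall>j\<ge>d. k j = 0}"

definition weight :: "nat \<Rightarrow> idx \<Rightarrow> real" where
  "weight d i = (\<Prod>j<d. fact (fst i j))"

definition S_space :: "nat \<Rightarrow> coeffs set" where
  "S_space d = {V. (\<forall>i. i \<notin> idx_set d \<longrightarrow> V i = 0) \<and>
      (\<lambda>i. (cmod (V i))\<^sup>2 * weight d i) summable_on idx_set d}"

definition S_norm :: "nat \<Rightarrow> coeffs \<Rightarrow> real" where
  "S_norm d V = sqrt (\<Sum>\<^sub>\<infinity>i\<in>idx_set d. (cmod (V i))\<^sup>2 * weight d i)"

definition S_tendsto :: "nat \<Rightarrow> ('a \<Rightarrow> coeffs) \<Rightarrow> coeffs \<Rightarrow> 'a filter \<Rightarrow> bool" where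
  "S_tendsto d F g Fl \<longleftrightarrow> g \<in> S_space d \<and> (\<forall>\<^sub>F x in Fl. F x \<in> S_space d) \<and>
      ((\<lambda>x. S_norm d (\<lambda>i. F x i - g i)) \<longlongrightarrow> 0) Fl"

definition eig :: "nat \<Rightarrow> (nat \<Rightarrow> complex) \<Rightarrow> real \<Rightarrow> idx \<Rightarrow> complex" where
  "eig d \<nu> \<Omega> i = (\<Sum>j<d. of_nat (fst i j) * \<nu> j) + \<i> * of_int (snd i) * of_real \<Omega>"

definition koopman_sg :: "nat \<Rightarrow> (nat \<Rightarrow> complex) \<Rightarrow> real \<Rightarrow> real \<Rightarrow> coeffs \<Rightarrow> coeffs" where
  "koopman_sg d \<nu> \<Omega> t V = (\<lambda>i. exp (eig d \<nu> \<Omega> i * of_real t) * V i)"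

definition proj :: "idx \<Rightarrow> coeffs \<Rightarrow> coeffs" where
  "proj i V = (\<lambda>j. if j = i then V i else 0)"

definition gen_dom :: "nat \<Rightarrow> (nat \<Rightarrow> complex) \<Rightarrow> real \<Rightarrow> coeffs set" where
  "gen_dom d \<nu> \<Omega> = {V \<in> S_space d. \<exists>W. S_tendsto d
      (\<lambda>t. \<lambda>i. (koopman_sg d \<nu> \<Omega> t V i - V i) / of_real t) W (at_right 0)}"

definition gen :: "nat \<Rightarrow> (nat \<Rightarrow> complex) \<Rightarrow> real \<Rightarrow> coeffs \<Rightarrow> coeffs" where
  "gen d \<nu> \<Omega> V = (THE W. S_tendsto d
      (\<lambda>t. \<lambda>i. (koopman_sg d \<nu> \<Omega> t V i - V i) / of_real t) W (at_right 0))"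

definition koopman_resolvent_set :: "nat \<Rightarrow> (nat \<Rightarrow> complex) \<Rightarrow> real \<Rightarrow> complex set" where
  "koopman_resolvent_set d \<nu> \<Omega> = {s.
      bij_betw (\<lambda>V. \<lambda>i. s * V i - gen d \<nu> \<Omega> V i) (gen_dom d \<nu> \<Omega>) (S_space d) \<and>
      (\<exists>C. \<forall>V\<in>gen_dom d \<nu> \<Omega>.
          S_norm d V \<le> C * S_norm d (\<lambda>i. s * V i - gen d \<nu> \<Omega> V i))}"

definition koopman_resolvent :: "nat \<Rightarrow> (nat \<Rightarrow> complex) \<Rightarrow> real \<Rightarrow> complex \<Rightarrow> coeffs \<Rightarrow> coeffs" where
  "koopman_resolvent d \<nu> \<Omega> s f = (THE g. g \<in> gen_dom d \<nu> \<Omega> \<and>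
      (\<lambda>i. s * g i - gen d \<nu> \<Omega> g i) = f)"

definition S_has_sum :: "nat \<Rightarrow> (idx \<Rightarrow> coeffs) \<Rightarrow> coeffs \<Rightarrow> bool" where
  "S_has_sum d F g \<longleftrightarrow> S_tendsto d (\<lambda>X. \<lambda>j. \<Sum>i\<in>X. F i j) g
      (finite_subsets_at_top (idx_set d))"

definition laplace_partial :: "nat \<Rightarrow> (nat \<Rightarrow> complex) \<Rightarrow> real \<Rightarrow> complex \<Rightarrow> coeffs \<Rightarrow> real \<Rightarrow> coeffs" where
  "laplace_partial d \<nu> \<Omega> s f T =
     (\<lambda>i. integral {0..T} (\<lambda>t. exp (- s * of_real t) * koopman_sg d \<nu> \<Omega> t f i))"

definition laplace_converges :: "nat \<Rightarrow> (nat \<Rightarrow> complex) \<Rightarrow> real \<Rightarrow> complex \<Rightarrow> coeffs \<Rightarrow> bool" where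
  "laplace_converges d \<nu> \<Omega> s f \<longleftrightarrow> (\<exists>g. S_tendsto d (laplace_partial d \<nu> \<Omega> s f) g at_top)"

end

theory Submission
  imports Defs
begin


lemma weight_ge1: "weight d i \<ge> 1"
  unfolding weight_def by (rule prod_ge_1) (simp add: fact_ge_1)

lemma weight_nonneg: "weight d i \<ge> 0"
  using weight_ge1[of d i] by linarith

definition Nsq :: "nat \<Rightarrow> coeffs \<Rightarrow> real" where
  "Nsq d V = (\<Sum>\<^sub>\<infinity>i\<in>idx_set d. (cmod (V i))\<^sup>2 * weight d i)"

lemma S_norm_Nsq: "S_norm d V = sqrt (Nsq d V)" by (simp add: S_norm_def Nsq_def)

lemma term_nonneg: "0 \<le> (cmod (V i))\<^sup>2 * weight d i"
  by (simp add: weight_nonneg)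

lemma Nsq_nonneg: "Nsq d V \<ge> 0"
  unfolding Nsq_def by (rule infsum_nonneg) (simp add: term_nonneg)

lemma S_summ: "V \<in> S_space d \<Longrightarrow> (\<lambda>i. (cmod (V i))\<^sup>2 * weight d i) summable_on idx_set d"
  by (simp add: S_space_def)

lemma mult_bound:
  assumes V: "V \<in> S_space d" and C: "\<And>i. cmod (m i) \<le> C"
  shows "(\<lambda>i. m i * V i) \<in> S_space d" "Nsq d (\<lambda>i. m i * V i) \<le> C\<^sup>2 * Nsq d V"
proof -
  have C0: "0 \<le> C" using C[of undefined] norm_ge_zero order_trans by blast
  have sV: "(\<lambda>i. (cmod (V i))\<^sup>2 * weight d i) summable_on idx_set d" using V by (simp add: S_space_def)
  have sC: "(\<lambda>i. C\<^sup>2 * ((cmod (V i))\<^sup>2 * weight d i)) summable_on idx_set d"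
    using summable_on_cmult_right[OF sV] by simp
  have le: "(cmod (m i * V i))\<^sup>2 * weight d i \<le> C\<^sup>2 * ((cmod (V i))\<^sup>2 * weight d i)" for i
  proof -
    have "(cmod (m i * V i))\<^sup>2 = (cmod (m i))\<^sup>2 * (cmod (V i))\<^sup>2" by (simp add: norm_mult power_mult_distrib)
    also have "\<dots> \<le> C\<^sup>2 * (cmod (V i))\<^sup>2" by (intro mult_right_mono power_mono C) auto
    finally show ?thesis using weight_nonneg[of d i] by (metis mult.assoc mult_right_mono)
  qed
  have s: "(\<lambda>i. (cmod (m i * V i))\<^sup>2 * weight d i) summable_on idx_set d"
    by (rule summable_on_comparison_test[OF sC]) (use le term_nonneg in auto)
  show "(\<lambda>i. m i * V i) \<in> S_space d" using V s by (simp add: S_space_def)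
  show "Nsq d (\<lambda>i. m i * V i) \<le> C\<^sup>2 * Nsq d V"
    unfolding Nsq_def infsum_cmult_right'[symmetric] by (rule infsum_mono[OF s sC le])
qed

lemma mult_bound_norm:
  assumes V: "V \<in> S_space d" and C: "\<And>i. cmod (m i) \<le> C"
  shows "S_norm d (\<lambda>i. m i * V i) \<le> C * S_norm d V"
proof -
  have C0: "0 \<le> C" using C[of undefined] norm_ge_zero order_trans by blast
  have "sqrt (Nsq d (\<lambda>i. m i * V i)) \<le> sqrt (C\<^sup>2 * Nsq d V)"
    using mult_bound(2)[OF V C] by simp
  also have "\<dots> = C * sqrt (Nsq d V)" using C0 by (simp add: real_sqrt_mult)
  finally show ?thesis by (simp add: S_norm_Nsq)
qed

lemma coeff_le:
  assumes V: "V \<in> S_space d" and i: "i \<in> idx_set d"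
  shows "cmod (V i) \<le> S_norm d V"
proof -
  have "(cmod (V i))\<^sup>2 \<le> (cmod (V i))\<^sup>2 * weight d i"
    using weight_ge1[of d i] by (simp add: mult_le_cancel_left1)
  also have "\<dots> = (\<Sum>j\<in>{i}. (cmod (V j))\<^sup>2 * weight d j)" by simp
  also have "\<dots> \<le> Nsq d V" unfolding Nsq_def
    by (rule finite_sum_le_infsum[OF S_summ[OF V]]) (use i term_nonneg in auto)
  finally show ?thesis by (simp add: S_norm_Nsq real_le_rsqrt)
qed

lemma S_diff:
  assumes U: "U \<in> S_space d" and V: "V \<in> S_space d"
  shows "(\<lambda>i. U i - V i) \<in> S_space d"
proof -
  have s: "(\<lambda>i. 2 * ((cmod (U i))\<^sup>2 * weight d i) + 2 * ((cmod (V i))\<^sup>2 * weight d i)) summable_on idx_set d"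
    by (intro summable_on_add summable_on_cmult_right S_summ U V)
  have le: "(cmod (U i - V i))\<^sup>2 * weight d i \<le> 2 * ((cmod (U i))\<^sup>2 * weight d i) + 2 * ((cmod (V i))\<^sup>2 * weight d i)" for i
  proof -
    have "cmod (U i - V i) \<le> cmod (U i) + cmod (V i)" by (rule norm_triangle_ineq4)
    hence "(cmod (U i - V i))\<^sup>2 \<le> (cmod (U i) + cmod (V i))\<^sup>2" by (intro power_mono) auto
    also have "\<dots> \<le> 2 * (cmod (U i))\<^sup>2 + 2 * (cmod (V i))\<^sup>2"
    proof -
      have "0 \<le> (cmod (U i) - cmod (V i))\<^sup>2" by simp
      thus ?thesis unfolding power2_sum power2_diff by linarith
    qed
    finally have "(cmod (U i - V i))\<^sup>2 * weight d i \<le> (2 * (cmod (U i))\<^sup>2 + 2 * (cmod (V i))\<^sup>2) * weight d i"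
      using weight_nonneg[of d i] by (rule mult_right_mono)
    thus ?thesis by (simp add: algebra_simps)
  qed
  have "(\<lambda>i. (cmod (U i - V i))\<^sup>2 * weight d i) summable_on idx_set d"
    by (rule summable_on_comparison_test[OF s]) (use le term_nonneg in auto)
  thus ?thesis using U V by (simp add: S_space_def)
qed



lemma S_tendsto_coeff:
  assumes T: "S_tendsto d F g Fl" and i: "i \<in> idx_set d"
  shows "((\<lambda>x. F x i) \<longlongrightarrow> g i) Fl"
proof -
  have g: "g \<in> S_space d" and ev: "\<forall>\<^sub>F x in Fl. F x \<in> S_space d"
    and lim: "((\<lambda>x. S_norm d (\<lambda>i. F x i - g i)) \<longlongrightarrow> 0) Fl"
    using T by (auto simp: S_tendsto_def)
  have "\<forall>\<^sub>F x in Fl. norm (F x i - g i) \<le> S_norm d (\<lambda>i. F x i - g i)"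
    using ev by eventually_elim (rule coeff_le[OF S_diff[OF _ g] i, simplified])
  hence "((\<lambda>x. F x i - g i) \<longlongrightarrow> 0) Fl"
    by (rule Lim_null_comparison[OF _ lim])
  thus ?thesis by (simp add: LIM_zero_iff)
qed

lemma S_tendsto_unique:
  assumes "S_tendsto d F g Fl" "S_tendsto d F h Fl" "Fl \<noteq> bot"
  shows "g = h"
proof
  fix i
  show "g i = h i"
  proof (cases "i \<in> idx_set d")
    case True
    show ?thesis using tendsto_unique[OF assms(3) S_tendsto_coeff[OF assms(1) True] S_tendsto_coeff[OF assms(2) True]] .
  next
    case False
    have "g i = 0" "h i = 0" using assms(1,2) False unfolding S_tendsto_def S_space_def by blast+
    thus ?thesis by simp
  qed
qed

lemma Nsq_split:
  fixes f :: "'a \<Rightarrow> real"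
  assumes s: "f summable_on I" and X: "finite X" "X \<subseteq> I"
  shows "infsum f I = sum f X + infsum f (I - X)" 
proof -
  have "I = X \<union> (I - X)" using X by auto
  hence "infsum f I = infsum f (X \<union> (I - X))" by simp
  also have "\<dots> = infsum f X + infsum f (I - X)"
    by (rule Infinite_Sum.infsum_Un_disjoint) (use X s in \<open>auto intro: summable_on_subset_banach[OF s]\<close>)
  finally show ?thesis using X by simp
qed

lemma Nsq_dominated:
  fixes q :: "'a \<Rightarrow> coeffs"
  assumes V: "V \<in> S_space d" and C: "\<forall>\<^sub>F x in Fl. \<forall>i. cmod (q x i) \<le> C"
    and lim: "\<And>i. i \<in> idx_set d \<Longrightarrow> ((\<lambda>x. q x i) \<longlongrightarrow> 0) Fl"
  shows "((\<lambda>x. Nsq d (\<lambda>i. q x i * V i)) \<longlongrightarrow> 0) Fl"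
proof (rule order_tendstoI)
  fix a :: real assume "a < 0"
  thus "\<forall>\<^sub>F x in Fl. a < Nsq d (\<lambda>i. q x i * V i)" using Nsq_nonneg
    by (intro always_eventually) (meson le_less_trans not_le)
next
  fix \<epsilon> :: real assume e: "0 < \<epsilon>"
  define I where "I = idx_set d"
  define a where "a = (\<lambda>i. (cmod (V i))\<^sup>2 * weight d i)"
  have sa: "a summable_on I" using S_summ[OF V] by (simp add: a_def I_def)
  define \<delta> where "\<delta> = \<epsilon> / (2 * (C\<^sup>2 + 1))"
  have "0 < 2 * (C\<^sup>2 + 1)" by (smt (verit) zero_le_power2)
  hence d0: "\<delta> > 0" using e unfolding \<delta>_def by (intro divide_pos_pos)
  have "\<forall>\<^sub>F X in finite_subsets_at_top I. dist (sum a X) (infsum a I) < \<delta>"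
    using infsum_tendsto[OF sa] d0 by (rule tendstoD)
  then obtain X where X: "finite X" "X \<subseteq> I" "dist (sum a X) (infsum a I) < \<delta>"
    unfolding eventually_finite_subsets_at_top by blast
  have tail: "infsum a (I - X) < \<delta>"
    using Nsq_split[OF sa X(1,2)] X(3) by (simp add: dist_real_def)
  have "((\<lambda>x. \<Sum>i\<in>X. (cmod (q x i))\<^sup>2 * a i) \<longlongrightarrow> (\<Sum>i\<in>X. 0\<^sup>2 * a i)) Fl"
    using X(2) by (intro tendsto_sum tendsto_mult tendsto_power tendsto_norm_zero lim tendsto_const)
      (auto simp: I_def)
  hence "\<forall>\<^sub>F x in Fl. (\<Sum>i\<in>X. (cmod (q x i))\<^sup>2 * a i) < \<epsilon> / 2"
    using e by (intro order_tendstoD) auto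
  with C show "\<forall>\<^sub>F x in Fl. Nsq d (\<lambda>i. q x i * V i) < \<epsilon>"
  proof eventually_elim
    case (elim x)
    define b where "b = (\<lambda>i. (cmod (q x i * V i))\<^sup>2 * weight d i)"
    have b_eq: "b i = (cmod (q x i))\<^sup>2 * a i" for i
      by (simp add: b_def a_def norm_mult power_mult_distrib)
    have sb: "b summable_on I" using S_summ[OF mult_bound(1)[OF V, of "q x" C]] elim
      by (simp add: b_def I_def)
    have sbt: "b summable_on (I - X)" by (rule summable_on_subset_banach[OF sb]) auto
    have sat: "(\<lambda>i. C\<^sup>2 * a i) summable_on (I - X)"
      by (intro summable_on_cmult_right summable_on_subset_banach[OF sa]) auto
    have "infsum b (I - X) \<le> infsum (\<lambda>i. C\<^sup>2 * a i) (I - X)"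
    proof (rule infsum_mono[OF sbt sat])
      fix i
      have "cmod (q x i) \<le> C" using elim(1) by blast
      hence "(cmod (q x i))\<^sup>2 \<le> C\<^sup>2" by (intro power_mono) auto
      thus "b i \<le> C\<^sup>2 * a i" unfolding b_eq by (rule mult_right_mono) (simp add: a_def term_nonneg)
    qed
    also have "\<dots> = C\<^sup>2 * infsum a (I - X)" by (rule infsum_cmult_right')
    also have "\<dots> \<le> C\<^sup>2 * \<delta>" using tail by (intro mult_left_mono) auto
    finally have t2: "infsum b (I - X) \<le> C\<^sup>2 * \<delta>" .
    have "C\<^sup>2 * \<delta> < \<epsilon> / 2"
    proof -
      have "C\<^sup>2 * \<delta> = \<epsilon> / 2 * (C\<^sup>2 / (C\<^sup>2 + 1))" by (simp add: \<delta>_def field_simps)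
      also have "\<dots> < \<epsilon> / 2 * 1"
      proof (intro mult_strict_left_mono)
        have "0 < C\<^sup>2 + 1" by (smt (verit) zero_le_power2)
        thus "C\<^sup>2 / (C\<^sup>2 + 1) < 1" by (simp add: divide_less_eq)
      qed (use e in auto)
      finally show ?thesis by simp
    qed
    have "Nsq d (\<lambda>i. q x i * V i) = infsum b I" by (simp add: Nsq_def b_def I_def)
    also have "\<dots> = sum b X + infsum b (I - X)" by (rule Nsq_split[OF sb X(1,2)])
    also have "sum b X = (\<Sum>i\<in>X. (cmod (q x i))\<^sup>2 * a i)" by (simp add: b_eq)
    finally show ?case using elim(2) t2 \<open>C\<^sup>2 * \<delta> < \<epsilon> / 2\<close> by linarith
  qed
qed

lemma S_norm_dominated:
  fixes q :: "'a \<Rightarrow> coeffs"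
  assumes V: "V \<in> S_space d" and C: "\<forall>\<^sub>F x in Fl. \<forall>i. cmod (q x i) \<le> C"
    and lim: "\<And>i. i \<in> idx_set d \<Longrightarrow> ((\<lambda>x. q x i) \<longlongrightarrow> 0) Fl"
  shows "((\<lambda>x. S_norm d (\<lambda>i. q x i * V i)) \<longlongrightarrow> 0) Fl"
  unfolding S_norm_Nsq using tendsto_real_sqrt[OF Nsq_dominated[OF assms]] by simp



lemma eig_Re:
  assumes "\<forall>j<d. Re (\<nu> j) \<le> 0"
  shows "Re (eig d \<nu> \<Omega> i) \<le> 0"
  unfolding eig_def using assms by (auto intro!: sum_nonpos mult_nonneg_nonpos)

lemma exp_sub1_bound:
  fixes z :: complex
  assumes "Re z \<le> 0"
  shows "cmod (exp z - 1) \<le> cmod z"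
proof -
  have "norm (exp z - exp 0) \<le> 1 * norm (z - 0)"
  proof (rule field_differentiable_bound[of "{w. Re w \<le> 0}" exp exp])
    show "convex {w. Re w \<le> 0}" by (rule convex_halfspace_Re_le)
    show "(exp has_field_derivative exp w) (at w within {w. Re w \<le> 0})" for w
      by (auto intro!: derivative_eq_intros)
    show "norm (exp w) \<le> 1" if "w \<in> {w. Re w \<le> 0}" for w
      using that by (simp add: norm_exp_eq_Re)
  qed (use assms in auto)
  thus ?thesis by simp
qed

lemma exp_sub1_bound2:
  fixes z :: complex
  assumes "Re z \<le> 0"
  shows "cmod (exp z - 1) \<le> 2"
proof -
  have "cmod (exp z - 1) \<le> cmod (exp z) + cmod 1" by (rule norm_triangle_ineq4)
  also have "cmod (exp z) \<le> 1" using assms by (simp add: norm_exp_eq_Re)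
  finally show ?thesis by simp
qed

lemma quot_lim: "((\<lambda>t::real. (exp (c * of_real t) - 1) / of_real t) \<longlongrightarrow> (c::complex)) (at_right 0)"
proof -
  have "((\<lambda>z. exp (c * z)) has_field_derivative c) (at 0)"
    by (auto intro!: derivative_eq_intros)
  hence l1: "((\<lambda>z. (exp (c * z) - 1) / z) \<longlongrightarrow> c) (at (0::complex))"
    unfolding has_field_derivative_iff by simp
  have l2: "filterlim (\<lambda>t::real. complex_of_real t) (at 0) (at_right 0)"
    unfolding filterlim_at
  proof
    show "\<forall>\<^sub>F t in at_right 0. complex_of_real t \<in> UNIV \<and> complex_of_real t \<noteq> 0"
      using eventually_at_right_less[of "0::real"] by eventually_elim simp
    show "((\<lambda>t. complex_of_real t) \<longlongrightarrow> 0) (at_right 0)"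
      by (auto intro!: tendsto_eq_intros)
  qed
  show ?thesis using filterlim_compose[OF l1 l2] by simp
qed

lemma gen_key:
  assumes nu: "\<forall>j<d. Re (\<nu> j) \<le> 0" and V: "V \<in> S_space d"
    and LV: "(\<lambda>i. eig d \<nu> \<Omega> i * V i) \<in> S_space d"
  shows "S_tendsto d (\<lambda>t. \<lambda>i. (koopman_sg d \<nu> \<Omega> t V i - V i) / of_real t)
           (\<lambda>i. eig d \<nu> \<Omega> i * V i) (at_right 0)"
proof -
  define L where "L = eig d \<nu> \<Omega>"
  have ReL: "Re (L i * of_real t) \<le> 0" if "t \<ge> 0" for i t
    using eig_Re[OF nu, of \<Omega> i] that by (simp add: L_def mult_nonpos_nonneg)
  define q where "q = (\<lambda>(t::real) i. if L i = 0 then 0 else ((exp (L i * of_real t) - 1) / of_real t) / L i - 1)"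
  have eq: "(koopman_sg d \<nu> \<Omega> t V i - V i) / of_real t - L i * V i = q t i * (L i * V i)" if "t > 0" for t i
    using that by (auto simp: q_def koopman_sg_def L_def field_simps)
  have bnd: "cmod (q t i) \<le> 2" if "t > 0" for t i
  proof (cases "L i = 0")
    case False
    have "cmod (exp (L i * of_real t) - 1) \<le> cmod (L i * of_real t)"
      by (rule exp_sub1_bound) (rule ReL, use that in simp)
    hence "cmod (exp (L i * of_real t) - 1) / cmod (L i * of_real t) \<le> 1"
      using False that by (simp add: divide_le_eq)
    hence "cmod (((exp (L i * of_real t) - 1) / of_real t) / L i) \<le> 1"
      by (simp add: norm_divide norm_mult divide_divide_eq_left mult.commute)
    hence "cmod (((exp (L i * of_real t) - 1) / of_real t) / L i - 1) \<le> 2"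
      using norm_triangle_ineq4[of "((exp (L i * of_real t) - 1) / of_real t) / L i" 1] by simp
    thus ?thesis unfolding q_def using False by simp
  qed (simp add: q_def)
  have lim: "((\<lambda>t. q t i) \<longlongrightarrow> 0) (at_right 0)" for i
  proof (cases "L i = 0")
    case False
    have "((\<lambda>t. ((exp (L i * of_real t) - 1) / of_real t) / L i - 1) \<longlongrightarrow> L i / L i - 1) (at_right 0)"
      by (intro tendsto_diff tendsto_divide quot_lim tendsto_const False)
    thus ?thesis using False unfolding q_def by simp
  qed (simp add: q_def)
  have evpos: "\<forall>\<^sub>F t in at_right (0::real). 0 < t" by (rule eventually_at_right_less)
  have inS: "\<forall>\<^sub>F t in at_right (0::real). (\<lambda>i. (koopman_sg d \<nu> \<Omega> t V i - V i) / of_real t) \<in> S_space d"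
    using evpos
  proof eventually_elim
    case (elim t)
    have "(\<lambda>i. ((exp (L i * of_real t) - 1) / of_real t) * V i) \<in> S_space d"
    proof (rule mult_bound(1)[OF V])
      fix i
      have "cmod ((exp (L i * of_real t) - 1) / of_real t) = cmod (exp (L i * of_real t) - 1) / t"
        using elim by (simp add: norm_divide)
      also have "\<dots> \<le> 2 / t" using exp_sub1_bound2[OF ReL[of t i]] elim
        by (intro divide_right_mono) auto
      finally show "cmod ((exp (L i * of_real t) - 1) / of_real t) \<le> 2 / t" .
    qed
    thus ?case by (simp add: koopman_sg_def L_def field_simps)
  qed
  have n0: "((\<lambda>t. S_norm d (\<lambda>i. q t i * (L i * V i))) \<longlongrightarrow> 0) (at_right 0)"
    by (rule S_norm_dominated[OF LV[folded L_def], of q 2])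
       (use evpos bnd in \<open>auto elim: eventually_mono intro: lim\<close>)
  have "((\<lambda>t. S_norm d (\<lambda>i. (koopman_sg d \<nu> \<Omega> t V i - V i) / of_real t - L i * V i)) \<longlongrightarrow> 0) (at_right 0)"
    by (rule Lim_transform_eventually[OF n0]) (use evpos in \<open>eventually_elim, simp add: eq\<close>)
  thus ?thesis using LV inS unfolding S_tendsto_def L_def by simp
qed

lemma gen_char:
  assumes nu: "\<forall>j<d. Re (\<nu> j) \<le> 0"
  shows "V \<in> gen_dom d \<nu> \<Omega> \<longleftrightarrow> V \<in> S_space d \<and> (\<lambda>i. eig d \<nu> \<Omega> i * V i) \<in> S_space d"
    and "V \<in> gen_dom d \<nu> \<Omega> \<Longrightarrow> gen d \<nu> \<Omega> V = (\<lambda>i. eig d \<nu> \<Omega> i * V i)"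
proof -
  have nb: "at_right (0::real) \<noteq> bot" by simp
  have G: "gen d \<nu> \<Omega> V = (\<lambda>i. eig d \<nu> \<Omega> i * V i)"
    if V: "V \<in> S_space d" and LV: "(\<lambda>i. eig d \<nu> \<Omega> i * V i) \<in> S_space d"
    unfolding gen_def
  proof (rule the_equality)
    show "S_tendsto d (\<lambda>t. \<lambda>i. (koopman_sg d \<nu> \<Omega> t V i - V i) / of_real t) (\<lambda>i. eig d \<nu> \<Omega> i * V i) (at_right 0)"
      by (rule gen_key[OF nu V LV])
    fix W assume "S_tendsto d (\<lambda>t. \<lambda>i. (koopman_sg d \<nu> \<Omega> t V i - V i) / of_real t) W (at_right 0)"
    thus "W = (\<lambda>i. eig d \<nu> \<Omega> i * V i)" by (rule S_tendsto_unique[OF _ gen_key[OF nu V LV] nb])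
  qed
  have D: "(\<lambda>i. eig d \<nu> \<Omega> i * V i) \<in> S_space d" if VD: "V \<in> gen_dom d \<nu> \<Omega>"
  proof -
    from VD have V: "V \<in> S_space d" unfolding gen_dom_def by blast
    from VD obtain W where W: "S_tendsto d (\<lambda>t. \<lambda>i. (koopman_sg d \<nu> \<Omega> t V i - V i) / of_real t) W (at_right 0)"
      unfolding gen_dom_def by blast
    have WS: "W \<in> S_space d" using W by (simp add: S_tendsto_def)
    have "W = (\<lambda>i. eig d \<nu> \<Omega> i * V i)"
    proof
      fix i
      show "W i = eig d \<nu> \<Omega> i * V i"
      proof (cases "i \<in> idx_set d")
        case True
        have l: "((\<lambda>t. (koopman_sg d \<nu> \<Omega> t V i - V i) / of_real t) \<longlongrightarrow> eig d \<nu> \<Omega> i * V i) (at_right 0)"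
        proof -
          have "((\<lambda>t. ((exp (eig d \<nu> \<Omega> i * of_real t) - 1) / of_real t) * V i) \<longlongrightarrow> eig d \<nu> \<Omega> i * V i) (at_right 0)"
            by (intro tendsto_mult quot_lim tendsto_const)
          thus ?thesis by (simp add: koopman_sg_def field_simps)
        qed
        show ?thesis by (rule tendsto_unique[OF nb S_tendsto_coeff[OF W True] l])
      next
        case False
        have "W i = 0" "V i = 0" using WS V False unfolding S_space_def by blast+
        thus ?thesis by simp
      qed
    qed
    thus ?thesis using WS by simp
  qed
  show "V \<in> gen_dom d \<nu> \<Omega> \<longleftrightarrow> V \<in> S_space d \<and> (\<lambda>i. eig d \<nu> \<Omega> i * V i) \<in> S_space d"
  proof
    assume "V \<in> gen_dom d \<nu> \<Omega>" thus "V \<in> S_space d \<and> (\<lambda>i. eig d \<nu> \<Omega> i * V i) \<in> S_space d"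
      using D unfolding gen_dom_def by blast
  next
    assume "V \<in> S_space d \<and> (\<lambda>i. eig d \<nu> \<Omega> i * V i) \<in> S_space d"
    thus "V \<in> gen_dom d \<nu> \<Omega>" using gen_key[OF nu] unfolding gen_dom_def by blast
  qed
  show "V \<in> gen_dom d \<nu> \<Omega> \<Longrightarrow> gen d \<nu> \<Omega> V = (\<lambda>i. eig d \<nu> \<Omega> i * V i)"
    using D G unfolding gen_dom_def by blast
qed



lemma s_minus_eig:
  assumes nu: "\<forall>j<d. Re (\<nu> j) \<le> 0" and s: "0 < Re s"
  shows "Re s \<le> cmod (s - eig d \<nu> \<Omega> i)" "s - eig d \<nu> \<Omega> i \<noteq> 0"
proof -
  have "Re s \<le> Re (s - eig d \<nu> \<Omega> i)" using eig_Re[OF nu, of \<Omega> i] by simp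
  also have "\<dots> \<le> cmod (s - eig d \<nu> \<Omega> i)" by (rule complex_Re_le_cmod)
  finally show "Re s \<le> cmod (s - eig d \<nu> \<Omega> i)" .
  thus "s - eig d \<nu> \<Omega> i \<noteq> 0" using s by auto
qed

lemma inv_bound:
  assumes nu: "\<forall>j<d. Re (\<nu> j) \<le> 0" and s: "0 < Re s"
  shows "cmod (1 / (s - eig d \<nu> \<Omega> i)) \<le> 1 / Re s"
  using s_minus_eig[OF nu s, of \<Omega> i] s by (simp add: norm_divide frac_le)

lemma ratio_bound:
  assumes nu: "\<forall>j<d. Re (\<nu> j) \<le> 0" and s: "0 < Re s"
  shows "cmod (eig d \<nu> \<Omega> i / (s - eig d \<nu> \<Omega> i)) \<le> cmod s / Re s + 1"
proof -
  define L where "L = eig d \<nu> \<Omega> i"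
  have a: "Re s \<le> cmod (s - L)" "s - L \<noteq> 0" using s_minus_eig[OF nu s] by (auto simp: L_def)
  have "L / (s - L) = s / (s - L) - 1" using a(2) by (simp add: field_simps)
  hence "cmod (L / (s - L)) \<le> cmod (s / (s - L)) + 1"
    using norm_triangle_ineq4[of "s / (s - L)" 1] by simp
  also have "cmod (s / (s - L)) = cmod s / cmod (s - L)" by (simp add: norm_divide)
  also have "\<dots> \<le> cmod s / Re s" using a s by (intro divide_left_mono) auto
  finally show ?thesis by (simp add: L_def)
qed

definition Rs :: "nat \<Rightarrow> (nat \<Rightarrow> complex) \<Rightarrow> real \<Rightarrow> complex \<Rightarrow> coeffs \<Rightarrow> coeffs" where
  "Rs d \<nu> \<Omega> s f = (\<lambda>i. 1 / (s - eig d \<nu> \<Omega> i) * f i)"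

lemma Rs_props:
  assumes nu: "\<forall>j<d. Re (\<nu> j) \<le> 0" and s: "0 < Re s" and f: "f \<in> S_space d"
  shows "Rs d \<nu> \<Omega> s f \<in> gen_dom d \<nu> \<Omega>"
    and "(\<lambda>i. s * Rs d \<nu> \<Omega> s f i - gen d \<nu> \<Omega> (Rs d \<nu> \<Omega> s f) i) = f"
proof -
  have S: "Rs d \<nu> \<Omega> s f \<in> S_space d" unfolding Rs_def
    by (rule mult_bound(1)[OF f inv_bound[OF nu s]])
  have "(\<lambda>i. eig d \<nu> \<Omega> i / (s - eig d \<nu> \<Omega> i) * f i) \<in> S_space d"
    by (rule mult_bound(1)[OF f ratio_bound[OF nu s]])
  hence LS: "(\<lambda>i. eig d \<nu> \<Omega> i * Rs d \<nu> \<Omega> s f i) \<in> S_space d" by (simp add: Rs_def)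
  show D: "Rs d \<nu> \<Omega> s f \<in> gen_dom d \<nu> \<Omega>" using gen_char(1)[OF nu] S LS by blast
  show "(\<lambda>i. s * Rs d \<nu> \<Omega> s f i - gen d \<nu> \<Omega> (Rs d \<nu> \<Omega> s f) i) = f"
    unfolding gen_char(2)[OF nu D]
  proof
    fix i
    have "s - eig d \<nu> \<Omega> i \<noteq> 0" using s_minus_eig[OF nu s] by blast
    have "s * Rs d \<nu> \<Omega> s f i - eig d \<nu> \<Omega> i * Rs d \<nu> \<Omega> s f i = (s - eig d \<nu> \<Omega> i) * Rs d \<nu> \<Omega> s f i"
      by (simp add: algebra_simps)
    also have "\<dots> = f i" using \<open>s - eig d \<nu> \<Omega> i \<noteq> 0\<close> by (simp add: Rs_def)
    finally show "s * Rs d \<nu> \<Omega> s f i - eig d \<nu> \<Omega> i * Rs d \<nu> \<Omega> s f i = f i" .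
  qed
qed

lemma T_eq:
  assumes nu: "\<forall>j<d. Re (\<nu> j) \<le> 0" and V: "V \<in> gen_dom d \<nu> \<Omega>"
  shows "(\<lambda>i. s * V i - gen d \<nu> \<Omega> V i) = (\<lambda>i. (s - eig d \<nu> \<Omega> i) * V i)"
  unfolding gen_char(2)[OF nu V] by (simp add: algebra_simps)

lemma resolvent_set_mem:
  assumes nu: "\<forall>j<d. Re (\<nu> j) \<le> 0" and s: "0 < Re s"
  shows "s \<in> koopman_resolvent_set d \<nu> \<Omega>"
    and "f \<in> S_space d \<Longrightarrow> koopman_resolvent d \<nu> \<Omega> s f = Rs d \<nu> \<Omega> s f"
proof -
  let ?T = "\<lambda>V. \<lambda>i. s * V i - gen d \<nu> \<Omega> V i"
  have nz: "s - eig d \<nu> \<Omega> i \<noteq> 0" for i using s_minus_eig[OF nu s] by blast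
  have inj: "inj_on ?T (gen_dom d \<nu> \<Omega>)"
  proof (rule inj_onI)
    fix V W assume V: "V \<in> gen_dom d \<nu> \<Omega>" and W: "W \<in> gen_dom d \<nu> \<Omega>" and e: "?T V = ?T W"
    from e have e2: "(\<lambda>i. (s - eig d \<nu> \<Omega> i) * V i) = (\<lambda>i. (s - eig d \<nu> \<Omega> i) * W i)"
      unfolding T_eq[OF nu V] T_eq[OF nu W] .
    show "V = W"
    proof
      fix i show "V i = W i" using fun_cong[OF e2, of i] nz[of i] by simp
    qed
  qed
  have img: "?T ` gen_dom d \<nu> \<Omega> = S_space d"
  proof
    show "?T ` gen_dom d \<nu> \<Omega> \<subseteq> S_space d"
    proof
      fix y assume "y \<in> ?T ` gen_dom d \<nu> \<Omega>"
      then obtain V where V: "V \<in> gen_dom d \<nu> \<Omega>" and y: "y = ?T V" by blast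
      have VS: "V \<in> S_space d" and LV: "(\<lambda>i. eig d \<nu> \<Omega> i * V i) \<in> S_space d"
        using gen_char(1)[OF nu] V by blast+
      have sV: "(\<lambda>i. s * V i) \<in> S_space d" by (rule mult_bound(1)[OF VS, of "\<lambda>_. s" "cmod s"]) simp
      show "y \<in> S_space d" using S_diff[OF sV LV] unfolding y gen_char(2)[OF nu V] .
    qed
    show "S_space d \<subseteq> ?T ` gen_dom d \<nu> \<Omega>"
    proof
      fix f assume f: "f \<in> S_space d"
      show "f \<in> ?T ` gen_dom d \<nu> \<Omega>"
      proof (rule image_eqI[of _ _ "Rs d \<nu> \<Omega> s f"])
        show "f = ?T (Rs d \<nu> \<Omega> s f)" using Rs_props(2)[OF nu s f] by simp
        show "Rs d \<nu> \<Omega> s f \<in> gen_dom d \<nu> \<Omega>" by (rule Rs_props(1)[OF nu s f])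
      qed
    qed
  qed
  have bnd: "\<forall>V\<in>gen_dom d \<nu> \<Omega>. S_norm d V \<le> (1 / Re s) * S_norm d (?T V)"
  proof
    fix V assume V: "V \<in> gen_dom d \<nu> \<Omega>"
    have TS: "?T V \<in> S_space d" using img V by blast
    have "V = (\<lambda>i. 1 / (s - eig d \<nu> \<Omega> i) * ?T V i)"
    proof
      fix i
      have "?T V i = (s - eig d \<nu> \<Omega> i) * V i" using fun_cong[OF T_eq[OF nu V, of s], where x=i] by simp
      thus "V i = 1 / (s - eig d \<nu> \<Omega> i) * ?T V i" using nz[of i] by simp
    qed
    hence "S_norm d V = S_norm d (\<lambda>i. 1 / (s - eig d \<nu> \<Omega> i) * ?T V i)" by simp
    also have "\<dots> \<le> (1 / Re s) * S_norm d (?T V)"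
      by (rule mult_bound_norm[OF TS inv_bound[OF nu s]])
    finally show "S_norm d V \<le> (1 / Re s) * S_norm d (?T V)" .
  qed
  show "s \<in> koopman_resolvent_set d \<nu> \<Omega>"
    unfolding koopman_resolvent_set_def mem_Collect_eq bij_betw_def
    using inj img bnd by blast
  assume f: "f \<in> S_space d"
  show "koopman_resolvent d \<nu> \<Omega> s f = Rs d \<nu> \<Omega> s f"
    unfolding koopman_resolvent_def
  proof (rule the_equality)
    show "Rs d \<nu> \<Omega> s f \<in> gen_dom d \<nu> \<Omega> \<and> ?T (Rs d \<nu> \<Omega> s f) = f" using Rs_props[OF nu s f] by blast
    fix g assume "g \<in> gen_dom d \<nu> \<Omega> \<and> ?T g = f"
    hence g: "g \<in> gen_dom d \<nu> \<Omega>" "?T g = ?T (Rs d \<nu> \<Omega> s f)" using Rs_props(2)[OF nu s f] by auto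
    show "g = Rs d \<nu> \<Omega> s f" by (rule inj_onD[OF inj g(2) g(1) Rs_props(1)[OF nu s f]])
  qed
qed



lemma partial_eq:
  assumes "finite X"
  shows "(\<lambda>j. \<Sum>i\<in>X. proj i f j / (s - eig d \<nu> \<Omega> i)) = (\<lambda>j. (if j \<in> X then 1 else 0) * (1 / (s - eig d \<nu> \<Omega> j) * f j))"
proof
  fix j
  have "(\<Sum>i\<in>X. proj i f j / (s - eig d \<nu> \<Omega> i)) = (\<Sum>i\<in>X. if j = i then f j / (s - eig d \<nu> \<Omega> j) else 0)"
    by (rule sum.cong) (auto simp: proj_def)
  also have "\<dots> = (if j \<in> X then f j / (s - eig d \<nu> \<Omega> j) else 0)"
    using assms by simp
  finally show "(\<Sum>i\<in>X. proj i f j / (s - eig d \<nu> \<Omega> i)) = (if j \<in> X then 1 else 0) * (1 / (s - eig d \<nu> \<Omega> j) * f j)"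
    by simp
qed

lemma has_sum_part:
  assumes g: "g \<in> S_space d"
  shows "S_tendsto d (\<lambda>X. \<lambda>j. (if j \<in> X then 1 else 0) * g j) g (finite_subsets_at_top (idx_set d))"
proof -
  define I where "I = idx_set d"
  define a where "a = (\<lambda>i. (cmod (g i))\<^sup>2 * weight d i)"
  have sa: "a summable_on I" using S_summ[OF g] by (simp add: a_def I_def)
  have inS: "(\<lambda>j. (if j \<in> X then 1 else 0) * g j) \<in> S_space d" for X
    by (rule mult_bound(1)[OF g, of _ 1]) simp
  have eq: "Nsq d (\<lambda>j. (if j \<in> X then 1 else 0) * g j - g j) = infsum a I - sum a X"
    if X: "finite X" "X \<subseteq> I" for X
  proof -
    define b where "b = (\<lambda>j. (cmod ((if j \<in> X then 1 else 0) * g j - g j))\<^sup>2 * weight d j)"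
    have b1: "b j = (if j \<in> X then 0 else a j)" for j by (simp add: b_def a_def)
    have sb: "b summable_on I"
      using S_summ[OF S_diff[OF inS[of X] g]] by (simp add: b_def I_def)
    have "Nsq d (\<lambda>j. (if j \<in> X then 1 else 0) * g j - g j) = infsum b I" by (simp add: Nsq_def b_def I_def)
    also have "\<dots> = sum b X + infsum b (I - X)" by (rule Nsq_split[OF sb X])
    also have "sum b X = 0" by (simp add: b1)
    also have "infsum b (I - X) = infsum a (I - X)" by (rule infsum_cong) (simp add: b1)
    also have "infsum a (I - X) = infsum a I - sum a X" using Nsq_split[OF sa X] by simp
    finally show ?thesis by simp
  qed
  have lim: "((\<lambda>X. infsum a I - sum a X) \<longlongrightarrow> 0) (finite_subsets_at_top I)"
    using tendsto_diff[OF tendsto_const infsum_tendsto[OF sa], of "infsum a I"] by simp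
  have "((\<lambda>X. Nsq d (\<lambda>j. (if j \<in> X then 1 else 0) * g j - g j)) \<longlongrightarrow> 0) (finite_subsets_at_top I)"
    by (rule Lim_transform_eventually[OF lim]) (use eq in \<open>auto intro!: eventually_finite_subsets_at_top_weakI\<close>)
  hence "((\<lambda>X. S_norm d (\<lambda>j. (if j \<in> X then 1 else 0) * g j - g j)) \<longlongrightarrow> 0) (finite_subsets_at_top I)"
    unfolding S_norm_Nsq using tendsto_real_sqrt by fastforce
  thus ?thesis unfolding S_tendsto_def I_def using g inS by simp
qed

lemma S_tendsto_cong_ev:
  assumes ev: "\<forall>\<^sub>F x in Fl. F x = G x" and T: "S_tendsto d F g Fl"
  shows "S_tendsto d G g Fl"
proof -
  have g: "g \<in> S_space d" and m: "\<forall>\<^sub>F x in Fl. F x \<in> S_space d"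
    and l: "((\<lambda>x. S_norm d (\<lambda>i. F x i - g i)) \<longlongrightarrow> 0) Fl" using T by (auto simp: S_tendsto_def)
  have m2: "\<forall>\<^sub>F x in Fl. G x \<in> S_space d" using ev m by eventually_elim simp
  have e2: "\<forall>\<^sub>F x in Fl. S_norm d (\<lambda>i. F x i - g i) = S_norm d (\<lambda>i. G x i - g i)"
    using ev by eventually_elim simp
  have "((\<lambda>x. S_norm d (\<lambda>i. G x i - g i)) \<longlongrightarrow> 0) Fl" by (rule Lim_transform_eventually[OF l e2])
  thus ?thesis using g m2 by (simp add: S_tendsto_def)
qed

lemma resolvent_series:
  assumes nu: "\<forall>j<d. Re (\<nu> j) \<le> 0" and s: "0 < Re s" and f: "f \<in> S_space d"
  shows "S_has_sum d (\<lambda>i. \<lambda>j. proj i f j / (s - eig d \<nu> \<Omega> i)) (koopman_resolvent d \<nu> \<Omega> s f)"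
proof -
  have R: "koopman_resolvent d \<nu> \<Omega> s f = Rs d \<nu> \<Omega> s f" by (rule resolvent_set_mem(2)[OF nu s f])
  have g: "Rs d \<nu> \<Omega> s f \<in> S_space d" using Rs_props(1)[OF nu s f] gen_char(1)[OF nu] by blast
  have T: "S_tendsto d (\<lambda>X. \<lambda>j. (if j \<in> X then 1 else 0) * Rs d \<nu> \<Omega> s f j) (Rs d \<nu> \<Omega> s f) (finite_subsets_at_top (idx_set d))"
    by (rule has_sum_part[OF g])
  have ev: "\<forall>\<^sub>F X in finite_subsets_at_top (idx_set d).
      (\<lambda>j. (if j \<in> X then 1 else 0) * Rs d \<nu> \<Omega> s f j) = (\<lambda>j. \<Sum>i\<in>X. proj i f j / (s - eig d \<nu> \<Omega> i))"
    by (rule eventually_finite_subsets_at_top_weakI) (simp add: partial_eq Rs_def)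
  show ?thesis unfolding S_has_sum_def R by (rule S_tendsto_cong_ev[OF ev T])
qed



lemma lap_eq:
  "laplace_partial d \<nu> \<Omega> s f T i = integral {0..T} (\<lambda>t. exp ((eig d \<nu> \<Omega> i - s) * of_real t) * f i)"
proof -
  have "(\<lambda>t. exp (- s * of_real t) * koopman_sg d \<nu> \<Omega> t f i) = (\<lambda>t. exp ((eig d \<nu> \<Omega> i - s) * of_real t) * f i)"
  proof
    fix t
    have "exp (- s * of_real t) * exp (eig d \<nu> \<Omega> i * of_real t) = exp ((eig d \<nu> \<Omega> i - s) * of_real t)"
      by (simp add: mult_exp_exp algebra_simps)
    thus "exp (- s * of_real t) * koopman_sg d \<nu> \<Omega> t f i = exp ((eig d \<nu> \<Omega> i - s) * of_real t) * f i"
      by (simp add: koopman_sg_def mult.assoc[symmetric])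
  qed
  thus ?thesis by (simp add: laplace_partial_def)
qed

lemma int_exp:
  fixes c a :: complex
  assumes c: "c \<noteq> 0" and T: "0 \<le> T"
  shows "integral {0..T} (\<lambda>t. exp (c * of_real t) * a) = (exp (c * of_real T) - 1) / c * a"
proof -
  have eq: "(exp (c * of_real T) - 1) / c * a = (\<lambda>t. exp (c * of_real t) / c * a) T - (\<lambda>t. exp (c * of_real t) / c * a) 0"
    using c by (simp add: field_simps)
  have "((\<lambda>t. exp (c * of_real t) * a) has_integral ((exp (c * of_real T) - 1) / c * a)) {0..T}"
    unfolding eq
  proof (rule fundamental_theorem_of_calculus[OF T])
    fix x :: real
    have "((\<lambda>z. exp (c * z) / c * a) has_field_derivative exp (c * of_real x) * a) (at (of_real x))"
      using c by (auto intro!: derivative_eq_intros)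
    thus "((\<lambda>t. exp (c * of_real t) / c * a) has_vector_derivative exp (c * of_real x) * a) (at x within {0..T})"
      by (rule has_vector_derivative_real_field)
  qed
  thus ?thesis by (rule integral_unique)
qed

lemma lap_conv:
  assumes nu: "\<forall>j<d. Re (\<nu> j) \<le> 0" and s: "0 < Re s" and f: "f \<in> S_space d"
  shows "laplace_converges d \<nu> \<Omega> s f"
proof -
  define \<sigma> where "\<sigma> = Re s"
  define c where "c = (\<lambda>i. eig d \<nu> \<Omega> i - s)"
  have cnz: "c i \<noteq> 0" for i using s_minus_eig(2)[OF nu s] by (metis c_def eq_iff_diff_eq_0)
  have cge: "\<sigma> \<le> cmod (c i)" for i
    using s_minus_eig(1)[OF nu s, of \<Omega> i] by (simp add: c_def \<sigma>_def norm_minus_commute)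
  have ReC: "Re (c i) \<le> - \<sigma>" for i using eig_Re[OF nu, of \<Omega> i] by (simp add: c_def \<sigma>_def)
  define g where "g = Rs d \<nu> \<Omega> s f"
  have g: "g \<in> S_space d" using Rs_props(1)[OF nu s f] gen_char(1)[OF nu] by (auto simp: g_def)
  have LP: "laplace_partial d \<nu> \<Omega> s f T = (\<lambda>i. (exp (c i * of_real T) - 1) / c i * f i)" if "T \<ge> 0" for T
  proof
    fix i show "laplace_partial d \<nu> \<Omega> s f T i = (exp (c i * of_real T) - 1) / c i * f i"
      using int_exp[OF cnz[of i] that, of "f i"] by (simp only: lap_eq c_def)
  qed
  have DF: "laplace_partial d \<nu> \<Omega> s f T i - g i = exp (c i * of_real T) / c i * f i" if "T \<ge> 0" for T i
  proof -
    have se: "s - eig d \<nu> \<Omega> i = - c i" by (simp add: c_def)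
    have "laplace_partial d \<nu> \<Omega> s f T i - g i = (exp (c i * of_real T) - 1) / c i * f i - 1 / (- c i) * f i"
      unfolding LP[OF that] g_def Rs_def se by simp
    also have "\<dots> = exp (c i * of_real T) / c i * f i" using cnz[of i] by (simp add: field_simps)
    finally show ?thesis .
  qed
  have expb: "cmod (exp (c i * of_real T)) \<le> exp (- \<sigma> * T)" if "T \<ge> 0" for T i
  proof -
    have "Re (c i) * T \<le> (- \<sigma>) * T" using ReC[of i] that by (rule mult_right_mono)
    thus ?thesis by (simp add: norm_exp_eq_Re)
  qed
  have s0: "0 < \<sigma>" using s by (simp add: \<sigma>_def)
  have inS: "laplace_partial d \<nu> \<Omega> s f T \<in> S_space d" if T: "T \<ge> 0" for T
    unfolding LP[OF T]
  proof (rule mult_bound(1)[OF f, of _ "2 / \<sigma>"])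
    fix i
    have "cmod (exp (c i * of_real T) - 1) \<le> 2"
      by (rule exp_sub1_bound2) (use ReC[of i] T s0 in \<open>simp add: mult_nonpos_nonneg\<close>)
    hence "cmod (exp (c i * of_real T) - 1) / cmod (c i) \<le> 2 / \<sigma>"
      using cge[of i] s0 by (intro frac_le) auto
    thus "cmod ((exp (c i * of_real T) - 1) / c i) \<le> 2 / \<sigma>" by (simp add: norm_divide)
  qed
  have nb: "S_norm d (\<lambda>i. laplace_partial d \<nu> \<Omega> s f T i - g i) \<le> exp (- \<sigma> * T) / \<sigma> * S_norm d f"
    if T: "T \<ge> 0" for T
  proof -
    have eqf: "(\<lambda>i. laplace_partial d \<nu> \<Omega> s f T i - g i) = (\<lambda>i. exp (c i * of_real T) / c i * f i)"
      using DF[OF T] by auto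
    have "S_norm d (\<lambda>i. exp (c i * of_real T) / c i * f i) \<le> exp (- \<sigma> * T) / \<sigma> * S_norm d f"
    proof (rule mult_bound_norm[OF f])
      fix i
      have "cmod (exp (c i * of_real T)) / cmod (c i) \<le> exp (- \<sigma> * T) / \<sigma>"
        using expb[OF T, of i] cge[of i] s0 by (intro frac_le) auto
      thus "cmod (exp (c i * of_real T) / c i) \<le> exp (- \<sigma> * T) / \<sigma>" by (simp add: norm_divide)
    qed
    thus ?thesis unfolding eqf .
  qed
  have e0: "((\<lambda>T. exp (- \<sigma> * T)) \<longlongrightarrow> 0) at_top"
    by (rule filterlim_compose[OF exp_at_bot filterlim_tendsto_neg_mult_at_bot[OF tendsto_const _ filterlim_ident]])
       (use s0 in simp)
  have up: "((\<lambda>T. exp (- \<sigma> * T) / \<sigma> * S_norm d f) \<longlongrightarrow> 0) at_top"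
    using tendsto_mult[OF tendsto_divide[OF e0 tendsto_const] tendsto_const, of \<sigma> "S_norm d f"] s0 by simp
  have "((\<lambda>T. S_norm d (\<lambda>i. laplace_partial d \<nu> \<Omega> s f T i - g i)) \<longlongrightarrow> 0) at_top"
  proof (rule tendsto_sandwich[OF _ _ tendsto_const up])
    show "\<forall>\<^sub>F T in at_top. 0 \<le> S_norm d (\<lambda>i. laplace_partial d \<nu> \<Omega> s f T i - g i)"
      by (simp add: S_norm_Nsq Nsq_nonneg)
    show "\<forall>\<^sub>F T in at_top. S_norm d (\<lambda>i. laplace_partial d \<nu> \<Omega> s f T i - g i) \<le> exp (- \<sigma> * T) / \<sigma> * S_norm d f"
      using eventually_ge_at_top[of "0::real"] by eventually_elim (rule nb)
  qed
  moreover have "\<forall>\<^sub>F T in at_top. laplace_partial d \<nu> \<Omega> s f T \<in> S_space d"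
    using eventually_ge_at_top[of "0::real"] by eventually_elim (rule inS)
  ultimately have "S_tendsto d (laplace_partial d \<nu> \<Omega> s f) g at_top"
    unfolding S_tendsto_def using g by simp
  thus ?thesis unfolding laplace_converges_def by blast
qed

lemma no_lim:
  fixes c :: complex
  assumes c0: "0 \<le> Re c" and c: "c \<noteq> 0"
  shows "\<not> ((\<lambda>T::real. exp (c * of_real T)) \<longlongrightarrow> M) at_top"
proof
  assume l: "((\<lambda>T::real. exp (c * of_real T)) \<longlongrightarrow> M) at_top"
  have "1 \<le> cmod M"
  proof (rule tendsto_lowerbound[OF tendsto_norm[OF l]])
    show "\<forall>\<^sub>F T in at_top. 1 \<le> cmod (exp (c * of_real T))"
      using eventually_ge_at_top[of "0::real"]
    proof eventually_elim
      case (elim T)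
      have "0 \<le> Re c * T" using c0 elim by simp
      thus ?case by (simp add: norm_exp_eq_Re)
    qed
  qed simp
  hence M0: "M \<noteq> 0" by auto
  define h where "h = 1 / (cmod c + 1)"
  have h0: "0 < h" unfolding h_def by (simp add: add_nonneg_pos)
  have l2: "((\<lambda>T::real. exp (c * of_real (h + T))) \<longlongrightarrow> M) at_top"
    by (rule filterlim_compose[OF l filterlim_tendsto_add_at_top[OF tendsto_const filterlim_ident]])
  moreover have l3: "((\<lambda>T::real. exp (c * of_real (h + T))) \<longlongrightarrow> exp (c * of_real h) * M) at_top"
  proof -
    have "(\<lambda>T::real. exp (c * of_real (h + T))) = (\<lambda>T. exp (c * of_real h) * exp (c * of_real T))"
      by (simp add: mult_exp_exp algebra_simps)
    thus ?thesis using tendsto_mult[OF tendsto_const l] by simp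
  qed
  ultimately have "exp (c * of_real h) * M = M"
    using tendsto_unique[OF trivial_limit_at_top_linorder l3 l2] by simp
  hence e1: "exp (c * of_real h) = 1" using M0 by simp
  then obtain n :: int where re: "Re (c * of_real h) = 0" and im: "Im (c * of_real h) = of_int (2 * n) * pi"
    unfolding exp_eq_1 by blast
  have "\<bar>Im (c * of_real h)\<bar> \<le> cmod (c * of_real h)" by (rule abs_Im_le_cmod)
  also have "\<dots> = cmod c * h" using h0 by (simp add: norm_mult)
  also have "\<dots> < 1"
  proof -
    have p: "0 < cmod c + 1" by (simp add: add_nonneg_pos)
    thus ?thesis unfolding h_def using p by (simp add: divide_less_eq)
  qed
  finally have lt: "\<bar>Im (c * of_real h)\<bar> < 1" .
  have "n = 0"
  proof (rule ccontr)
    assume "n \<noteq> 0"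
    hence "1 \<le> \<bar>of_int n :: real\<bar>" by linarith
    hence "2 * pi \<le> \<bar>of_int (2 * n) * pi\<bar>" by (simp add: abs_mult)
    with lt im pi_gt3 show False by linarith
  qed
  hence "c * of_real h = 0" using re im by (simp add: complex_eq_iff)
  thus False using c h0 by simp
qed

lemma lap_div:
  assumes s: "Re s \<le> 0"
  shows "\<exists>f\<in>S_space d. \<not> laplace_converges d \<nu> \<Omega> s f"
proof -
  define i0 :: idx where "i0 = ((\<lambda>_. 0), 0)"
  define f :: coeffs where "f = (\<lambda>i. if i = i0 then 1 else 0)"
  have i0I: "i0 \<in> idx_set d" by (simp add: i0_def idx_set_def)
  have fS: "f \<in> S_space d"
    unfolding S_space_def
  proof (intro CollectI conjI allI impI)
    show "f i = 0" if "i \<notin> idx_set d" for i using that i0I by (auto simp: f_def)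
    show "(\<lambda>i. (cmod (f i))\<^sup>2 * weight d i) summable_on idx_set d"
      unfolding summable_on_def
      by (rule exI, rule has_sum_finite_neutralI[of "{i0}"]) (use i0I in \<open>auto simp: f_def\<close>)
  qed
  have eig0: "eig d \<nu> \<Omega> i0 = 0" by (simp add: eig_def i0_def)
  have LP: "laplace_partial d \<nu> \<Omega> s f T i0 = integral {0..T} (\<lambda>t. exp ((- s) * of_real t) * 1)" for T
    by (simp add: lap_eq eig0 f_def)
  show ?thesis
  proof (intro bexI[OF _ fS] notI)
    assume "laplace_converges d \<nu> \<Omega> s f"
    then obtain g where "S_tendsto d (laplace_partial d \<nu> \<Omega> s f) g at_top"
      unfolding laplace_converges_def by blast
    from S_tendsto_coeff[OF this i0I]
    have l: "((\<lambda>T. integral {0..T} (\<lambda>t. exp ((- s) * of_real t) * 1)) \<longlongrightarrow> g i0) at_top"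
      by (simp add: LP)
    show False
    proof (cases "s = 0")
      case True
      have ev: "\<forall>\<^sub>F T in at_top. integral {0..T} (\<lambda>t. exp ((- s) * of_real t) * 1) = complex_of_real T"
        using eventually_ge_at_top[of "0::real"] by eventually_elim (simp add: True scaleR_conv_of_real)
      have "((\<lambda>T. complex_of_real T) \<longlongrightarrow> g i0) at_top"
        by (rule Lim_transform_eventually[OF l ev])
      hence "((\<lambda>T. Re (complex_of_real T)) \<longlongrightarrow> Re (g i0)) at_top" by (rule tendsto_Re)
      hence "((\<lambda>T::real. T) \<longlongrightarrow> Re (g i0)) at_top" by simp
      moreover have "filterlim (\<lambda>T::real. T) at_infinity at_top"
        by (rule filterlim_at_top_imp_at_infinity[OF filterlim_ident])
      ultimately show False using not_tendsto_and_filterlim_at_infinity[of at_top "\<lambda>T::real. T"] by auto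
    next
      case False
      have ev: "\<forall>\<^sub>F T in at_top. (- s) * integral {0..T} (\<lambda>t. exp ((- s) * of_real t) * 1) + 1 = exp ((- s) * of_real T)"
        using eventually_ge_at_top[of "0::real"]
      proof eventually_elim
        case (elim T)
        have "integral {0..T} (\<lambda>t. exp ((- s) * of_real t) * 1) = (exp ((- s) * of_real T) - 1) / (- s) * 1"
          by (rule int_exp) (use False elim in auto)
        moreover have "(- s) * ((exp ((- s) * of_real T) - 1) / (- s) * 1) + 1 = exp ((- s) * of_real T)"
          using False by (simp add: field_simps)
        ultimately show ?case by simp
      qed
      have "((\<lambda>T. (- s) * integral {0..T} (\<lambda>t. exp ((- s) * of_real t) * 1) + 1) \<longlongrightarrow> (- s) * g i0 + 1) at_top"
        by (rule tendsto_add[OF tendsto_mult[OF tendsto_const l] tendsto_const])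
      hence "((\<lambda>T::real. exp ((- s) * of_real T)) \<longlongrightarrow> (- s) * g i0 + 1) at_top"
        by (rule Lim_transform_eventually[OF _ ev])
      thus False using no_lim[of "- s"] s False by simp
    qed
  qed
qed


theorem theorem3:
  fixes n :: nat and \<Omega> :: real and \<nu> \<mu> :: "nat \<Rightarrow> complex"
  assumes "n \<ge> 2" and "\<Omega> > 0"
    and "\<forall>j<n-1. \<mu> j = exp (complex_of_real (2 * pi) * \<nu> j / complex_of_real \<Omega>)"
    and "inj_on \<mu> {..<n-1}"
    and "\<forall>i j. i \<le> j \<longrightarrow> j < n-1 \<longrightarrow> cmod (\<mu> j) \<le> cmod (\<mu> i)"
    and "\<forall>j<n-1. cmod (\<mu> j) < 1"
    and "\<forall>j<n-1. Re (\<nu> j) < 0"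
  shows "(\<forall>s. 0 < Re s \<longrightarrow>
            s \<in> koopman_resolvent_set (n-1) \<nu> \<Omega> \<and>
            (\<forall>f\<in>S_space (n-1).
               S_has_sum (n-1)
                 (\<lambda>i. \<lambda>j. proj i f j / (s - eig (n-1) \<nu> \<Omega> i))
                 (koopman_resolvent (n-1) \<nu> \<Omega> s f)))
       \<and> {s. \<forall>f\<in>S_space (n-1). laplace_converges (n-1) \<nu> \<Omega> s f} = {s. 0 < Re s}"
proof -
  have nu: "\<forall>j<n-1. Re (\<nu> j) \<le> 0" using assms(7) by (auto simp: less_imp_le)
  have P1: "\<forall>s. 0 < Re s \<longrightarrow>
            s \<in> koopman_resolvent_set (n-1) \<nu> \<Omega> \<and>
            (\<forall>f\<in>S_space (n-1).
               S_has_sum (n-1)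
                 (\<lambda>i. \<lambda>j. proj i f j / (s - eig (n-1) \<nu> \<Omega> i))
                 (koopman_resolvent (n-1) \<nu> \<Omega> s f))"
    using resolvent_set_mem(1)[OF nu] resolvent_series[OF nu] by blast
  have P2: "{s. \<forall>f\<in>S_space (n-1). laplace_converges (n-1) \<nu> \<Omega> s f} = {s. 0 < Re s}"
  proof (intro set_eqI iffI)
    fix s assume "s \<in> {s. \<forall>f\<in>S_space (n-1). laplace_converges (n-1) \<nu> \<Omega> s f}"
    hence A: "\<forall>f\<in>S_space (n-1). laplace_converges (n-1) \<nu> \<Omega> s f" by simp
    show "s \<in> {s. 0 < Re s}"
    proof (rule ccontr)
      assume "s \<notin> {s. 0 < Re s}"
      hence "Re s \<le> 0" by simp
      from lap_div[OF this, of "n-1" \<nu> \<Omega>] A show False by blast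
    qed
  next
    fix s assume "s \<in> {s. 0 < Re s}"
    thus "s \<in> {s. \<forall>f\<in>S_space (n-1). laplace_converges (n-1) \<nu> \<Omega> s f}"
      using lap_conv[OF nu] by simp
  qed
  show ?thesis using P1 P2 by blast
qed

end
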